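(* Let $A\in\{\mathbb Z,\mathbb R\}$ and let $X\subset\mathbb R^d$ be bounded. Then $\mathrm{Flt}_d^A(X)=\sup\{\mathrm{width}(K): K\subset\mathbb R^d \text{ is an } A\text{-}X\text{-free convex body}\}$.
   Context: A convex body in $\mathbb R^d$ is a nonempty compact convex subset of $\mathbb R^d$. An $A$-unimodular transformation is a map $T:\mathbb R^d\to\mathbb R^d$, $T(x)=Mx+b$ with $M\in \mathrm{GL}_d(\mathbb Z)$ and $b\in A^d$; an $A$-unimodular copy of $X\subset\mathbb R^d$ is a set $T(X)$ for such a $T$. For $u\in(\mathbb Z^d)^*$ (extended linearly to $\mathbb R^d$), $\mathrm{width}_u(K)=\sup_{x,y\in K}|u(x)-u(y)|$ and $\mathrm{width}(K)=\inf_{u\in(\mathbb Z^d)^*\setminus\{0\}}\mathrm{width}_u(K)$. $\mathrm{Flt}_d^A(X)=\sup\{\mathrm{width}(K): K\subset\mathbb R^d \text{ a convex body containing no } A\text{-unimodular copy of } X\}$. A convex set $K$ is $A$-$X$-free if its relative interior contains no $A$-unimodular copy of $X$ (the relative interior of a single point is that point). *)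

theory Defs
  imports "HOL-Analysis.Analysis"
begin

definition GLZ :: "(real^'n^'n) set" where
  "GLZ = {M. (\<forall>i j. M $ i $ j \<in> \<int>) \<and> (det M = 1 \<or> det M = -1)}"

definition unimodular_copies :: "real set \<Rightarrow> (real^'n) set \<Rightarrow> (real^'n) set set" where
  "unimodular_copies A X =
     {(\<lambda>x. M *v x + b) ` X | M b. M \<in> GLZ \<and> (\<forall>i. b $ i \<in> A)}"

definition convex_body :: "(real^'n) set \<Rightarrow> bool" where
  "convex_body K \<longleftrightarrow> K \<noteq> {} \<and> compact K \<and> convex K"

text \<open>Integer linear functionals u in (Z^d)^*, represented by integer vectors u, u(x) = u \<bullet> x.\<close>
definition width_dir :: "real^'n \<Rightarrow> (real^'n) set \<Rightarrow> ereal" where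
  "width_dir u K = (SUP p\<in>K \<times> K. ereal \<bar>u \<bullet> fst p - u \<bullet> snd p\<bar>)"

definition lattice_width :: "(real^'n) set \<Rightarrow> ereal" where
  "lattice_width K = (INF u\<in>{u::real^'n. (\<forall>i. u $ i \<in> \<int>) \<and> u \<noteq> 0}. width_dir u K)"

definition Flt :: "real set \<Rightarrow> (real^'n) set \<Rightarrow> ereal" where
  "Flt A X = (SUP K\<in>{K. convex_body K \<and> (\<forall>Y\<in>unimodular_copies A X. \<not> Y \<subseteq> K)}.
                 lattice_width K)"

definition X_free :: "real set \<Rightarrow> (real^'n) set \<Rightarrow> (real^'n) set \<Rightarrow> bool" where
  "X_free A X K \<longleftrightarrow> convex K \<and> (\<forall>Y\<in>unimodular_copies A X. \<not> Y \<subseteq> rel_interior K)"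

end

theory Submission
  imports Defs
begin

lemma width_dir_nonneg:
  assumes "K \<noteq> {}" shows "0 \<le> width_dir u K"
proof -
  obtain x where "x \<in> K" using assms by blast
  hence "ereal \<bar>u \<bullet> fst (x,x) - u \<bullet> snd (x,x)\<bar> \<le> width_dir u K"
    unfolding width_dir_def by (intro SUP_upper) auto
  thus ?thesis by (simp add: zero_ereal_def)
qed

lemma lattice_width_nonneg:
  assumes "K \<noteq> {}" shows "0 \<le> lattice_width K"
  unfolding lattice_width_def by (rule INF_greatest) (use width_dir_nonneg[OF assms] in auto)

lemma width_dir_scale:
  fixes t :: real
  assumes "0 \<le> t" "K \<noteq> {}"
  shows "width_dir u ((\<lambda>x. x - (1 - t) *\<^sub>R (x - c)) ` K) = ereal t * width_dir u K"
proof -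
  let ?f = "\<lambda>x. x - (1 - t) *\<^sub>R (x - c)"
  have img: "?f ` K \<times> ?f ` K = (\<lambda>p. (?f (fst p), ?f (snd p))) ` (K \<times> K)"
    by force
  have eq: "\<And>p. ereal \<bar>u \<bullet> ?f (fst p) - u \<bullet> ?f (snd p)\<bar>
           = ereal t * ereal \<bar>u \<bullet> fst p - u \<bullet> snd p\<bar>"
  proof -
    fix p :: "(real^'a) \<times> (real^'a)"
    have "u \<bullet> ?f (fst p) - u \<bullet> ?f (snd p) = t * (u \<bullet> fst p - u \<bullet> snd p)"
      by (simp add: inner_diff_right algebra_simps)
    hence "\<bar>u \<bullet> ?f (fst p) - u \<bullet> ?f (snd p)\<bar> = t * \<bar>u \<bullet> fst p - u \<bullet> snd p\<bar>"
      using assms(1) by (simp add: abs_mult)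
    thus "ereal \<bar>u \<bullet> ?f (fst p) - u \<bullet> ?f (snd p)\<bar>
           = ereal t * ereal \<bar>u \<bullet> fst p - u \<bullet> snd p\<bar>" by simp
  qed
  have "width_dir u (?f ` K) = (SUP p\<in>K \<times> K. ereal t * ereal \<bar>u \<bullet> fst p - u \<bullet> snd p\<bar>)"
    unfolding width_dir_def img image_image by (simp add: eq)
  also have "\<dots> = ereal t * width_dir u K"
    unfolding width_dir_def
    by (rule SUP_ereal_mult_left) (use assms in auto)
  finally show ?thesis .
qed

lemma lattice_width_scale:
  fixes t :: real
  assumes "0 \<le> t" "K \<noteq> {}"
  shows "ereal t * lattice_width K \<le> lattice_width ((\<lambda>x. x - (1 - t) *\<^sub>R (x - c)) ` K)"
  unfolding lattice_width_def
proof (rule INF_greatest)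
  fix u :: "real^'a" assume u: "u \<in> {u. (\<forall>i. u $ i \<in> \<int>) \<and> u \<noteq> 0}"
  have "ereal t * (INF u\<in>{u::real^'a. (\<forall>i. u $ i \<in> \<int>) \<and> u \<noteq> 0}. width_dir u K)
        \<le> ereal t * width_dir u K"
    by (rule ereal_mult_left_mono) (use u assms in \<open>auto intro: INF_lower\<close>)
  thus "ereal t * (INF u\<in>{u::real^'a. (\<forall>i. u $ i \<in> \<int>) \<and> u \<noteq> 0}. width_dir u K)
        \<le> width_dir u ((\<lambda>x. x - (1 - t) *\<^sub>R (x - c)) ` K)"
    using width_dir_scale[OF assms] by simp
qed

theorem lemma2p2:
  fixes A :: "real set" and X :: "(real^'n) set"
  assumes "A = \<int> \<or> A = UNIV"
    and "bounded X"
  shows "Flt A X = (SUP K\<in>{K. convex_body K \<and> X_free A X K}. lattice_width K)"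
proof (rule antisym)
  show "Flt A X \<le> (SUP K\<in>{K. convex_body K \<and> X_free A X K}. lattice_width K)"
    unfolding Flt_def
  proof (rule SUP_subset_mono)
    show "{K. convex_body K \<and> (\<forall>Y\<in>unimodular_copies A X. \<not> Y \<subseteq> K)}
          \<subseteq> {K. convex_body K \<and> X_free A X K}"
      unfolding X_free_def convex_body_def using rel_interior_subset by blast
  qed simp
next
  show "(SUP K\<in>{K. convex_body K \<and> X_free A X K}. lattice_width K) \<le> Flt A X"
  proof (rule SUP_least)
    fix K assume "K \<in> {K. convex_body K \<and> X_free A X K}"
    hence cb: "convex_body K" and fr: "X_free A X K" by auto
    have ne: "K \<noteq> {}" and cp: "compact K" and cv: "convex K"
      using cb unfolding convex_body_def by auto
    obtain c where c: "c \<in> rel_interior K"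
      using rel_interior_eq_empty[OF cv] ne by blast
    have key: "ereal t * lattice_width K \<le> Flt A X" if t: "0 < t" "t < 1" for t :: real
    proof -
      define f where "f = (\<lambda>x::real^'n. x - (1 - t) *\<^sub>R (x - c))"
      have f_eq: "f = (\<lambda>x. ((1 - t) *\<^sub>R c) + t *\<^sub>R x)"
        unfolding f_def by (auto simp: algebra_simps)
      have sub: "f ` K \<subseteq> rel_interior K"
        unfolding f_def using rel_interior_convex_shrink[OF cv c] t by auto
      have "convex_body (f ` K)"
        unfolding convex_body_def f_eq using ne cp cv
        by (auto intro!: compact_continuous_image continuous_intros convex_linear_image
             simp: image_image[symmetric] convex_translation convex_scaling)
      moreover have "\<forall>Y\<in>unimodular_copies A X. \<not> Y \<subseteq> f ` K"
        using fr sub unfolding X_free_def by blast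
      ultimately have "lattice_width (f ` K) \<le> Flt A X"
        unfolding Flt_def by (intro SUP_upper) auto
      moreover have "ereal t * lattice_width K \<le> lattice_width (f ` K)"
        unfolding f_def using lattice_width_scale[OF _ ne, of t c] t by simp
      ultimately show ?thesis by simp
    qed
    show "lattice_width K \<le> Flt A X"
    proof (rule ereal_le_mult_one_interval)
      have "ereal (1/2) * lattice_width K \<le> Flt A X" by (rule key) auto
      moreover have "0 \<le> ereal (1/2) * lattice_width K"
        using lattice_width_nonneg[OF ne] by simp
      ultimately show "Flt A X \<noteq> -\<infinity>" by auto
    next
      fix z :: ereal assume "0 < z" "z < 1"
      then obtain t where "z = ereal t" "0 < t" "t < 1" by (cases z) auto
      thus "z * lattice_width K \<le> Flt A X" using key by simp
    qed
  qed
qed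

end
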